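(* Let $N\geq 1$ and let $X=(X_1,\dots,X_N)$ be a random vector in $\{-1,1\}^N$ with unit covariance $\rho=\rho^X$, $\rho_{i,j}=\mathbf{E}[X_iX_j]$. (i) The matrix $\rho$ is singular if and only if there exist real deterministic coefficients $\lambda_1,\dots,\lambda_N$, not all zero, such that $\sum_k\lambda_kX_k=0$ almost surely. (ii) If $\rho$ is singular, then $\pi(\rho)$ lies on the boundary of $\mathcal{U}_N^*$ in $\mathscr{F}_N^*$.
   Context: $\mathcal{U}_N$ is the set of all matrices $\rho^X$ for random vectors $X\in\{-1,1\}^N$ (unit covariances). $\mathscr{F}_N^*$ is the space of real arrays indexed by pairs $1\le i<j\le N$, $\pi(\rho)=(\rho_{i,j})_{i<j}$, and $\mathcal{U}_N^*=\pi(\mathcal{U}_N)$. *)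

theory Defs
  imports "HOL-Probability.Probability" "Jordan_Normal_Form.Determinant"
begin

text \<open>Indices are 0-based: coordinates 0..N-1 play the role of 1..N in the paper.\<close>

definition rho :: "'a measure \<Rightarrow> ('a \<Rightarrow> nat \<Rightarrow> real) \<Rightarrow> nat \<Rightarrow> nat \<Rightarrow> nat \<Rightarrow> real" where
  "rho M X N i j = (if i < N \<and> j < N then integral\<^sup>L M (\<lambda>\<omega>. X \<omega> i * X \<omega> j) else 0)"

definition pm1_vec :: "nat \<Rightarrow> (nat \<Rightarrow> real) \<Rightarrow> bool" where
  "pm1_vec N x \<longleftrightarrow> (\<forall>i<N. x i \<in> {-1, 1})"

text \<open>Every such
  random vector has a law which is a discrete distribution on {-1,1}^N, so it suffices
  to range over pmfs with the identity random vector.\<close>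
definition U :: "nat \<Rightarrow> (nat \<Rightarrow> nat \<Rightarrow> real) set" where
  "U N = {rho (measure_pmf p) (\<lambda>x. x) N | p. \<forall>x\<in>set_pmf p. pm1_vec N x}"

text \<open>The space F_N^* of real arrays indexed by pairs i<j (<N), as functions on
  nat \<times> nat vanishing outside those pairs (with the product topology).\<close>
definition F_star :: "nat \<Rightarrow> (nat \<times> nat \<Rightarrow> real) set" where
  "F_star N = {f. \<forall>i j. \<not> (i < j \<and> j < N) \<longrightarrow> f (i, j) = 0}"

definition pi_proj :: "nat \<Rightarrow> (nat \<Rightarrow> nat \<Rightarrow> real) \<Rightarrow> (nat \<times> nat \<Rightarrow> real)" where
  "pi_proj N r = (\<lambda>(i, j). if i < j \<and> j < N then r i j else 0)"

definition U_star :: "nat \<Rightarrow> (nat \<times> nat \<Rightarrow> real) set" where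
  "U_star N = pi_proj N ` U N"

end

theory Submission
  imports Defs
begin

lemma rho_integrable:
  fixes X :: "'a \<Rightarrow> nat \<Rightarrow> real"
  assumes P: "prob_space M"
    and meas: "\<And>i. i < N \<Longrightarrow> (\<lambda>\<omega>. X \<omega> i) \<in> borel_measurable M"
    and pm: "AE \<omega> in M. \<forall>i<N. X \<omega> i \<in> {-1, 1}"
    and ij: "i < N" "j < N"
  shows "integrable M (\<lambda>\<omega>. X \<omega> i * X \<omega> j)"
proof -
  interpret prob_space M by (rule P)
  show ?thesis
  proof (rule finite_measure.integrable_const_bound[where B=1])
    show "finite_measure M" by unfold_locales
    show "AE x in M. norm (X x i * X x j) \<le> 1"
      using pm
    proof eventually_elim
      case (elim x)
      then have "\<bar>X x i\<bar> = 1" "\<bar>X x j\<bar> = 1" using ij by auto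
      then show ?case by (simp add: abs_mult)
    qed
    show "(\<lambda>\<omega>. X \<omega> i * X \<omega> j) \<in> borel_measurable M"
      using meas ij by (intro borel_measurable_times) auto
  qed
qed

lemma rho_diag:
  fixes X :: "'a \<Rightarrow> nat \<Rightarrow> real"
  assumes P: "prob_space M"
    and meas: "\<And>i. i < N \<Longrightarrow> (\<lambda>\<omega>. X \<omega> i) \<in> borel_measurable M"
    and pm: "AE \<omega> in M. \<forall>i<N. X \<omega> i \<in> {-1, 1}"
    and i: "i < N"
  shows "rho M X N i i = 1"
proof -
  interpret prob_space M by (rule P)
  have "integral\<^sup>L M (\<lambda>\<omega>. X \<omega> i * X \<omega> i) = integral\<^sup>L M (\<lambda>_. 1)"
    by (rule integral_cong_AE) (use pm i meas in \<open>auto elim!: eventually_mono\<close>)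
  then show ?thesis using i by (simp add: rho_def prob_space)
qed

lemma rho_sym: "rho M X N i j = rho M X N j i"
  by (simp add: rho_def mult.commute conj_commute)

lemma rho_lin:
  fixes X :: "'a \<Rightarrow> nat \<Rightarrow> real"
  assumes P: "prob_space M"
    and meas: "\<And>i. i < N \<Longrightarrow> (\<lambda>\<omega>. X \<omega> i) \<in> borel_measurable M"
    and pm: "AE \<omega> in M. \<forall>i<N. X \<omega> i \<in> {-1, 1}"
    and i: "i < N"
  shows "(\<Sum>j<N. rho M X N i j * l j) = integral\<^sup>L M (\<lambda>\<omega>. X \<omega> i * (\<Sum>j<N. l j * X \<omega> j))"
proof -
  have "integral\<^sup>L M (\<lambda>\<omega>. X \<omega> i * (\<Sum>j<N. l j * X \<omega> j))
      = integral\<^sup>L M (\<lambda>\<omega>. \<Sum>j<N. l j * (X \<omega> i * X \<omega> j))"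
    by (simp add: sum_distrib_left mult.assoc mult.left_commute)
  also have "\<dots> = (\<Sum>j<N. integral\<^sup>L M (\<lambda>\<omega>. l j * (X \<omega> i * X \<omega> j)))"
    by (rule Bochner_Integration.integral_sum[where I="{..<N}" and M=M and f="\<lambda>j \<omega>. l j * (X \<omega> i * X \<omega> j)"]) (use rho_integrable[OF P meas pm i] in auto)
  also have "\<dots> = (\<Sum>j<N. rho M X N i j * l j)"
    using i by (intro sum.cong) (auto simp: rho_def)
  finally show ?thesis by simp
qed

lemma rho_quad:
  fixes X :: "'a \<Rightarrow> nat \<Rightarrow> real"
  assumes P: "prob_space M"
    and meas: "\<And>i. i < N \<Longrightarrow> (\<lambda>\<omega>. X \<omega> i) \<in> borel_measurable M"
    and pm: "AE \<omega> in M. \<forall>i<N. X \<omega> i \<in> {-1, 1}"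
  shows "(\<Sum>i<N. l i * (\<Sum>j<N. rho M X N i j * l j)) = integral\<^sup>L M (\<lambda>\<omega>. (\<Sum>j<N. l j * X \<omega> j)^2)"
proof -
  have "integral\<^sup>L M (\<lambda>\<omega>. (\<Sum>j<N. l j * X \<omega> j)^2)
      = integral\<^sup>L M (\<lambda>\<omega>. \<Sum>i<N. l i * (X \<omega> i * (\<Sum>j<N. l j * X \<omega> j)))"
    by (simp add: power2_eq_square sum_distrib_right mult.assoc)
  also have "\<dots> = (\<Sum>i<N. integral\<^sup>L M (\<lambda>\<omega>. l i * (X \<omega> i * (\<Sum>j<N. l j * X \<omega> j))))"
  proof (rule Bochner_Integration.integral_sum[where I="{..<N}" and M=M and f="\<lambda>i \<omega>. l i * (X \<omega> i * (\<Sum>j<N. l j * X \<omega> j))"])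
    fix i assume i: "i \<in> {..<N}"
    have eq: "\<And>\<omega>. X \<omega> i * (\<Sum>j<N. l j * X \<omega> j) = (\<Sum>j<N. l j * (X \<omega> i * X \<omega> j))"
      by (simp add: sum_distrib_left mult.left_commute)
    show "integrable M (\<lambda>\<omega>. l i * (X \<omega> i * (\<Sum>j<N. l j * X \<omega> j)))"
      unfolding eq using rho_integrable[OF P meas pm] i by auto
  qed
  also have "\<dots> = (\<Sum>i<N. l i * (\<Sum>j<N. rho M X N i j * l j))"
    using rho_lin[OF P meas pm] by (intro sum.cong) auto
  finally show ?thesis by simp
qed

lemma mulv:
  assumes "i < N" "dim_vec v = N"
  shows "(mat N N (\<lambda>(i, j). f i j) *\<^sub>v v) $ i = (\<Sum>j<N. f i j * v $ j)"
  using assms by (simp add: scalar_prod_def atLeast0LessThan)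

lemma sq_integrable:
  fixes X :: "'a \<Rightarrow> nat \<Rightarrow> real"
  assumes P: "prob_space M"
    and meas: "\<And>i. i < N \<Longrightarrow> (\<lambda>\<omega>. X \<omega> i) \<in> borel_measurable M"
    and pm: "AE \<omega> in M. \<forall>i<N. X \<omega> i \<in> {-1, 1}"
  shows "integrable M (\<lambda>\<omega>. (\<Sum>j<N. l j * X \<omega> j)^2)"
proof -
  interpret prob_space M by (rule P)
  show ?thesis
  proof (rule finite_measure.integrable_const_bound[where B="(\<Sum>j<N. \<bar>l j\<bar>)^2"])
    show "finite_measure M" by unfold_locales
    show "AE x in M. norm ((\<Sum>j<N. l j * X x j)^2) \<le> (\<Sum>j<N. \<bar>l j\<bar>)^2"
      using pm
    proof eventually_elim
      case (elim x)
      have "\<bar>\<Sum>j<N. l j * X x j\<bar> \<le> (\<Sum>j<N. \<bar>l j * X x j\<bar>)" by (rule sum_abs)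
      also have "\<dots> = (\<Sum>j<N. \<bar>l j\<bar>)"
        using elim by (intro sum.cong) (auto simp: abs_mult)
      finally have "\<bar>\<Sum>j<N. l j * X x j\<bar> \<le> (\<Sum>j<N. \<bar>l j\<bar>)" .
      then have "\<bar>\<Sum>j<N. l j * X x j\<bar>^2 \<le> (\<Sum>j<N. \<bar>l j\<bar>)^2"
        by (intro power_mono) auto
      then show ?case by simp
    qed
    show "(\<lambda>\<omega>. (\<Sum>j<N. l j * X \<omega> j)^2) \<in> borel_measurable M"
      using meas by (intro borel_measurable_power borel_measurable_sum borel_measurable_times) auto
  qed
qed

lemma part1_fwd:
  fixes X :: "'a \<Rightarrow> nat \<Rightarrow> real"
  assumes P: "prob_space M"
    and meas: "\<And>i. i < N \<Longrightarrow> (\<lambda>\<omega>. X \<omega> i) \<in> borel_measurable M"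
    and pm: "AE \<omega> in M. \<forall>i<N. X \<omega> i \<in> {-1, 1}"
    and d: "det (mat N N (\<lambda>(i, j). rho M X N i j)) = 0"
  obtains l where "\<exists>k<N. l k \<noteq> 0" "\<And>i. i < N \<Longrightarrow> (\<Sum>j<N. rho M X N i j * l j) = 0"
    "AE \<omega> in M. (\<Sum>k<N. l k * X \<omega> k) = 0"
proof -
  let ?A = "mat N N (\<lambda>(i, j). rho M X N i j)"
  have "?A \<in> carrier_mat N N" by simp
  from d det_0_iff_vec_prod_zero[OF this] obtain v where
    v: "v \<in> carrier_vec N" "v \<noteq> 0\<^sub>v N" "?A *\<^sub>v v = 0\<^sub>v N" by auto
  define l where "l k = v $ k" for k
  have lin: "(\<Sum>j<N. rho M X N i j * l j) = 0" if i: "i < N" for i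
  proof -
    have "(?A *\<^sub>v v) $ i = 0" using v(3) i by simp
    then show ?thesis using mulv[OF i, of v] v(1) by (simp add: l_def)
  qed
  have nz: "\<exists>k<N. l k \<noteq> 0"
  proof (rule ccontr)
    assume "\<not> ?thesis"
    then have "v = 0\<^sub>v N" using v(1) by (intro eq_vecI) (auto simp: l_def)
    with v(2) show False by simp
  qed
  have "integral\<^sup>L M (\<lambda>\<omega>. (\<Sum>j<N. l j * X \<omega> j)^2) = 0"
    using rho_quad[OF P meas pm, of l] lin by simp
  then have "AE \<omega> in M. (\<Sum>j<N. l j * X \<omega> j)^2 = 0"
    using integral_nonneg_eq_0_iff_AE[OF sq_integrable[OF P meas pm]] by simp
  then have "AE \<omega> in M. (\<Sum>j<N. l j * X \<omega> j) = 0" by simp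
  with nz lin that show ?thesis by blast
qed

lemma part1_bwd:
  fixes X :: "'a \<Rightarrow> nat \<Rightarrow> real"
  assumes P: "prob_space M"
    and meas: "\<And>i. i < N \<Longrightarrow> (\<lambda>\<omega>. X \<omega> i) \<in> borel_measurable M"
    and pm: "AE \<omega> in M. \<forall>i<N. X \<omega> i \<in> {-1, 1}"
    and nz: "\<exists>k<N. l k \<noteq> 0" and ae: "AE \<omega> in M. (\<Sum>k<N. l k * X \<omega> k) = 0"
  shows "det (mat N N (\<lambda>(i, j). rho M X N i j)) = 0"
proof -
  let ?A = "mat N N (\<lambda>(i, j). rho M X N i j)"
  have A: "?A \<in> carrier_mat N N" by simp
  let ?v = "vec N l"
  have "?v \<noteq> 0\<^sub>v N"
  proof
    assume "?v = 0\<^sub>v N"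
    then have "\<forall>k<N. l k = 0" by (metis index_vec index_zero_vec(1))
    with nz show False by blast
  qed
  moreover have "?A *\<^sub>v ?v = 0\<^sub>v N"
  proof (rule eq_vecI)
    fix i assume "i < dim_vec (0\<^sub>v N :: real vec)"
    then have i: "i < N" by simp
    have "(?A *\<^sub>v ?v) $ i = (\<Sum>j<N. rho M X N i j * l j)"
      using mulv[OF i, of ?v] by simp
    also have "\<dots> = integral\<^sup>L M (\<lambda>\<omega>. X \<omega> i * (\<Sum>j<N. l j * X \<omega> j))"
      by (rule rho_lin[OF P meas pm i])
    also have "\<dots> = 0"
      by (rule integral_eq_zero_AE) (use ae in \<open>auto elim!: eventually_mono\<close>)
    finally show "(?A *\<^sub>v ?v) $ i = 0\<^sub>v N $ i" using i by simp
  qed simp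
  ultimately show ?thesis unfolding det_0_iff_vec_prod_zero[OF A]
    by (intro exI[of _ ?v]) auto
qed

lemma in_U:
  fixes X :: "'a \<Rightarrow> nat \<Rightarrow> real"
  assumes P: "prob_space M"
    and meas: "\<And>i. i < N \<Longrightarrow> (\<lambda>\<omega>. X \<omega> i) \<in> borel_measurable M"
    and pm: "\<And>\<omega> i. \<omega> \<in> space M \<Longrightarrow> i < N \<Longrightarrow> X \<omega> i \<in> {-1, 1}"
  shows "rho M X N \<in> U N"
proof -
  interpret prob_space M by (rule P)
  define Y where "Y \<omega> = restrict (X \<omega>) {..<N}" for \<omega>
  define S where "S = PiE {..<N} (\<lambda>_. {-1, 1::real})"
  have finS: "finite S" unfolding S_def by (intro finite_PiE) auto
  have YS: "Y \<in> space M \<rightarrow> S" using pm by (auto simp: Y_def S_def)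
  have pre: "Y -` {a} \<inter> space M = {\<omega> \<in> space M. \<forall>i\<in>{..<N}. X \<omega> i = a i}" if "a \<in> S" for a
    using that by (auto simp: Y_def S_def PiE_def extensional_def fun_eq_iff)
  have "Y \<in> M \<rightarrow>\<^sub>M count_space S"
    unfolding measurable_count_space_eq2[OF finS]
  proof (intro conjI ballI YS)
    fix a assume a: "a \<in> S"
    have "{\<omega> \<in> space M. \<forall>i\<in>{..<N}. X \<omega> i = a i} \<in> sets M"
    proof (rule sets.sets_Collect_finite_All)
      fix i assume i: "i \<in> {..<N}"
      have "{\<omega> \<in> space M. X \<omega> i = a i} = (\<lambda>\<omega>. X \<omega> i) -` {a i} \<inter> space M" by auto
      also have "\<dots> \<in> sets M" using meas i by (intro measurable_sets) auto
      finally show "{\<omega> \<in> space M. X \<omega> i = a i} \<in> sets M" .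
    qed simp
    then show "Y -` {a} \<inter> space M \<in> sets M" using pre[OF a] by simp
  qed
  then have Ym: "Y \<in> M \<rightarrow>\<^sub>M count_space UNIV"
    using measurable_compose[OF _ measurable_count_space, of Y M S] by simp
  define D where "D = distr M (count_space UNIV) Y"
  have sD: "sets D = UNIV" by (simp add: D_def)
  have pD: "prob_space D" unfolding D_def by (rule prob_space_distr[OF Ym])
  have mD: "measure D {a} = measure M (Y -` {a} \<inter> space M)" for a
    unfolding D_def using Ym by (simp add: measure_distr)
  have "AE \<omega> in M. \<forall>a\<in>S. Y \<omega> = a \<longrightarrow> measure D {a} \<noteq> 0"
  proof (rule AE_finite_allI[OF finS])
    fix a assume a: "a \<in> S"
    show "AE \<omega> in M. Y \<omega> = a \<longrightarrow> measure D {a} \<noteq> 0"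
    proof (cases "measure D {a} = 0")
      case True
      have "Y -` {a} \<inter> space M \<in> sets M"
        using measurable_sets[OF Ym, of "{a}"] by simp
      moreover have "emeasure M (Y -` {a} \<inter> space M) = 0"
        using True mD[of a] by (simp add: emeasure_eq_measure)
      ultimately have "Y -` {a} \<inter> space M \<in> null_sets M" by auto
      from AE_not_in[OF this] AE_space show ?thesis by eventually_elim (use True in auto)
    qed simp
  qed
  moreover have "AE \<omega> in M. Y \<omega> \<in> S" using YS by (intro AE_I2) auto
  ultimately have "AE \<omega> in M. measure D {Y \<omega>} \<noteq> 0" by eventually_elim auto
  then have "AE x in D. measure D {x} \<noteq> 0"
    unfolding D_def using Ym by (subst AE_distr_iff) (auto simp: D_def[symmetric])
  with pD sD have Dpmf: "D \<in> {M :: (nat \<Rightarrow> real) measure. prob_space M \<and> sets M = UNIV \<and> (AE x in M. measure M {x} \<noteq> 0)}"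
    by auto
  define p where "p = Abs_pmf D"
  have pD': "measure_pmf p = D" unfolding p_def using Dpmf by (rule Abs_pmf_inverse)
  have supp: "pm1_vec N x" if x: "x \<in> set_pmf p" for x
  proof -
    have "measure D {x} \<noteq> 0" using x by (simp add: set_pmf_iff pmf.rep_eq pD')
    then have "Y -` {x} \<inter> space M \<noteq> {}" using mD[of x] by auto
    then obtain \<omega> where w: "\<omega> \<in> space M" "Y \<omega> = x" by auto
    show ?thesis unfolding pm1_vec_def
    proof (intro allI impI)
      fix i assume i: "i < N"
      then show "x i \<in> {-1, 1}" using w pm[OF w(1) i] by (auto simp: Y_def)
    qed
  qed
  have "rho (measure_pmf p) (\<lambda>x. x) N = rho M X N"
  proof (intro ext)
    fix i j
    show "rho (measure_pmf p) (\<lambda>x. x) N i j = rho M X N i j"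
    proof (cases "i < N \<and> j < N")
      case True
      have "integral\<^sup>L D (\<lambda>x. x i * x j) = integral\<^sup>L M (\<lambda>\<omega>. Y \<omega> i * Y \<omega> j)"
        unfolding D_def by (rule integral_distr[OF Ym]) simp
      also have "\<dots> = integral\<^sup>L M (\<lambda>\<omega>. X \<omega> i * X \<omega> j)"
        using True by (simp add: Y_def)
      finally show ?thesis using True by (simp add: rho_def pD')
    qed (auto simp: rho_def)
  qed
  then have "rho M X N = rho (measure_pmf p) (\<lambda>x. x) N \<and> (\<forall>x\<in>set_pmf p. pm1_vec N x)"
    using supp by auto
  then show ?thesis unfolding U_def mem_Collect_eq by (rule exI)
qed

lemma notU:
  fixes l :: "nat \<Rightarrow> real" and \<rho> :: "nat \<Rightarrow> nat \<Rightarrow> real"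
  assumes lin: "\<And>i. i < N \<Longrightarrow> (\<Sum>j<N. \<rho> i j * l j) = 0"
    and ab: "a < N" "b < N" "a \<noteq> b" "l a \<noteq> 0" "l b \<noteq> 0"
    and sym: "\<And>i j. \<rho> i j = \<rho> j i"
    and diag: "\<And>i. i < N \<Longrightarrow> \<rho> i i = 1"
    and t: "t > 0"
  shows "(\<lambda>q. pi_proj N \<rho> q - t * (case q of (i, j) \<Rightarrow> if i < j \<and> j < N then l i * l j else 0))
           \<notin> U_star N"
proof
  assume "(\<lambda>q. pi_proj N \<rho> q - t * (case q of (i, j) \<Rightarrow> if i < j \<and> j < N then l i * l j else 0))
           \<in> U_star N"
  then obtain r0 where r0: "r0 \<in> U N" and eq0: "(\<lambda>q. pi_proj N \<rho> q - t * (case q of (i, j) \<Rightarrow> if i < j \<and> j < N then l i * l j else 0)) = pi_proj N r0"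
    unfolding U_star_def by (rule imageE)
  from r0 obtain p where pm: "\<forall>x\<in>set_pmf p. pm1_vec N x"
    and r0p: "r0 = rho (measure_pmf p) (\<lambda>x. x) N"
    unfolding U_def mem_Collect_eq by blast
  have eq: "(\<lambda>q. pi_proj N \<rho> q - t * (case q of (i, j) \<Rightarrow> if i < j \<and> j < N then l i * l j else 0))
             = pi_proj N (rho (measure_pmf p) (\<lambda>x. x) N)"
    using eq0 unfolding r0p .
  define r where "r = rho (measure_pmf p) (\<lambda>x. x) N"
  have meas: "\<And>i. i < N \<Longrightarrow> (\<lambda>x::nat\<Rightarrow>real. x i) \<in> borel_measurable (measure_pmf p)" by simp
  have pmA: "AE x in measure_pmf p. \<forall>i<N. x i \<in> {-1, 1}"
    by (rule AE_pmfI) (use pm in \<open>auto simp: pm1_vec_def\<close>)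
  define c where "c i j = (if i \<noteq> j then l i * l j else 0)" for i j
  have req: "r i j = \<rho> i j - t * c i j" if "i < N" "j < N" for i j
  proof -
    consider "i < j" | "j < i" | "i = j" by linarith
    then show ?thesis
    proof cases
      case 1
      from fun_cong[OF eq, of "(i, j)"] show ?thesis using 1 that
        by (simp add: pi_proj_def r_def c_def)
    next
      case 2
      from fun_cong[OF eq, of "(j, i)"] have "r j i = \<rho> j i - t * (l j * l i)"
        using 2 that by (simp add: pi_proj_def r_def)
      then show ?thesis using 2 sym[of i j] rho_sym[of "measure_pmf p" "\<lambda>x. x" N i j]
        by (simp add: r_def c_def mult.commute)
    next
      case 3
      then show ?thesis using rho_diag[OF prob_space_measure_pmf meas pmA, of i] diag[of i] that
        by (simp add: r_def c_def)
    qed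
  qed
  have nonneg: "0 \<le> (\<Sum>i<N. l i * (\<Sum>j<N. r i j * l j))"
  proof -
    have "0 \<le> integral\<^sup>L (measure_pmf p) (\<lambda>x. (\<Sum>j<N. l j * x j)^2)"
      by (rule Bochner_Integration.integral_nonneg) simp
    then show ?thesis using rho_quad[OF prob_space_measure_pmf meas pmA, of l] by (simp add: r_def)
  qed
  have "(\<Sum>i<N. l i * (\<Sum>j<N. r i j * l j))
      = (\<Sum>i<N. l i * (\<Sum>j<N. \<rho> i j * l j) - t * (\<Sum>j<N. l i * c i j * l j))"
    by (intro sum.cong refl) (simp add: req sum_subtractf sum_distrib_left algebra_simps)
  also have "\<dots> = - t * (\<Sum>i<N. \<Sum>j<N. l i * c i j * l j)"
    using lin by (simp add: sum_subtractf sum_distrib_left sum_negf)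
  finally have eq2: "(\<Sum>i<N. l i * (\<Sum>j<N. r i j * l j)) = - t * (\<Sum>i<N. \<Sum>j<N. l i * c i j * l j)" .
  have nn: "0 \<le> l i * c i j * l j" for i j
  proof -
    have "l i * c i j * l j = (if i \<noteq> j then (l i * l j)^2 else 0)"
      by (simp add: c_def power2_eq_square)
    then show ?thesis by simp
  qed
  have "l a * c a b * l b = (l a)^2 * (l b)^2" using ab by (simp add: c_def power2_eq_square algebra_simps)
  then have "0 < l a * c a b * l b" using ab by simp
  also have "\<dots> \<le> (\<Sum>j<N. l a * c a j * l j)"
    using ab nn by (intro member_le_sum) auto
  also have "\<dots> \<le> (\<Sum>i<N. \<Sum>j<N. l i * c i j * l j)"
    using ab nn by (intro member_le_sum sum_nonneg) auto
  finally have Spos: "0 < (\<Sum>i<N. \<Sum>j<N. l i * c i j * l j)" .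
  have "0 < t * (\<Sum>i<N. \<Sum>j<N. l i * c i j * l j)" by (rule mult_pos_pos[OF t Spos])
  with eq2 nonneg show False by linarith
qed

theorem theorem3:
  fixes M :: "'a measure" and X :: "'a \<Rightarrow> nat \<Rightarrow> real" and N :: nat
  assumes "prob_space M"
    and "N \<ge> 1"
    and "\<And>i. i < N \<Longrightarrow> (\<lambda>\<omega>. X \<omega> i) \<in> borel_measurable M"
    and "\<And>\<omega> i. \<omega> \<in> space M \<Longrightarrow> i < N \<Longrightarrow> X \<omega> i \<in> {-1, 1}"
  shows "(det (mat N N (\<lambda>(i, j). rho M X N i j)) = 0 \<longleftrightarrow>
            (\<exists>l :: nat \<Rightarrow> real. (\<exists>k<N. l k \<noteq> 0) \<and>
               (AE \<omega> in M. (\<Sum>k<N. l k * X \<omega> k) = 0)))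
       \<and> (det (mat N N (\<lambda>(i, j). rho M X N i j)) = 0 \<longrightarrow>
            pi_proj N (rho M X N) \<in> (subtopology euclidean (F_star N)) frontier_of (U_star N))"
proof -
  note P = assms(1) and meas = assms(3)
  have pm: "AE \<omega> in M. \<forall>i<N. X \<omega> i \<in> {-1, 1}"
    using assms(4) by (intro AE_I2) auto
  have part1: "det (mat N N (\<lambda>(i, j). rho M X N i j)) = 0 \<longleftrightarrow>
            (\<exists>l :: nat \<Rightarrow> real. (\<exists>k<N. l k \<noteq> 0) \<and>
               (AE \<omega> in M. (\<Sum>k<N. l k * X \<omega> k) = 0))"
  proof
    assume "det (mat N N (\<lambda>(i, j). rho M X N i j)) = 0"
    from part1_fwd[OF P meas pm this] show "\<exists>l :: nat \<Rightarrow> real. (\<exists>k<N. l k \<noteq> 0) \<and>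
               (AE \<omega> in M. (\<Sum>k<N. l k * X \<omega> k) = 0)" by blast
  next
    assume "\<exists>l :: nat \<Rightarrow> real. (\<exists>k<N. l k \<noteq> 0) \<and>
               (AE \<omega> in M. (\<Sum>k<N. l k * X \<omega> k) = 0)"
    then show "det (mat N N (\<lambda>(i, j). rho M X N i j)) = 0"
      using part1_bwd[OF P meas pm] by blast
  qed
  have part2: "pi_proj N (rho M X N) \<in> (subtopology euclidean (F_star N)) frontier_of (U_star N)"
    if d: "det (mat N N (\<lambda>(i, j). rho M X N i j)) = 0"
  proof -
    let ?\<rho> = "rho M X N"
    let ?T = "subtopology euclidean (F_star N)"
    obtain l where nz: "\<exists>k<N. l k \<noteq> 0" and lin: "\<And>i. i < N \<Longrightarrow> (\<Sum>j<N. ?\<rho> i j * l j) = 0"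
      using part1_fwd[OF P meas pm d] by metis
    from nz obtain a where a: "a < N" "l a \<noteq> 0" by blast
    have diag: "\<And>i. i < N \<Longrightarrow> ?\<rho> i i = 1" using rho_diag[OF P meas pm] by blast
    obtain b where b: "b < N" "b \<noteq> a" "l b \<noteq> 0"
    proof (rule ccontr)
      assume "\<not> thesis"
      with that have z: "\<And>j. j < N \<Longrightarrow> j \<noteq> a \<Longrightarrow> l j = 0" by blast
      have "(\<Sum>j<N. ?\<rho> a j * l j) = ?\<rho> a a * l a + (\<Sum>j\<in>{..<N} - {a}. ?\<rho> a j * l j)"
        using a by (simp add: sum.remove)
      also have "(\<Sum>j\<in>{..<N} - {a}. ?\<rho> a j * l j) = 0"
        using z by (intro sum.neutral) auto
      finally show False using lin[OF a(1)] diag[OF a(1)] a by simp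
    qed
    define g where "g = (\<lambda>q. case q of (i, j) \<Rightarrow> if i < j \<and> j < N then l i * l j else (0::real))"
    define f where "f t = (\<lambda>q. pi_proj N ?\<rho> q - t * g q)" for t :: real
    have topT: "topspace ?T = F_star N" by simp
    have fF: "f t \<in> F_star N" for t
      by (auto simp: f_def g_def F_star_def pi_proj_def)
    have x0: "pi_proj N ?\<rho> = f 0" by (simp add: f_def)
    have inU: "pi_proj N ?\<rho> \<in> U_star N"
      unfolding U_star_def by (rule imageI[OF in_U[OF P meas assms(4)]])
    have cl: "pi_proj N ?\<rho> \<in> ?T closure_of U_star N"
    proof (rule subsetD[OF closure_of_subset_Int])
      show "pi_proj N ?\<rho> \<in> topspace ?T \<inter> U_star N"
        using inU fF[of 0] x0 topT by simp
    qed
    have notint: "pi_proj N ?\<rho> \<notin> ?T interior_of U_star N"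
    proof
      assume x0I: "pi_proj N ?\<rho> \<in> ?T interior_of U_star N"
      have "continuous_on UNIV f"
        unfolding f_def by (intro continuous_on_coordinatewise_then_product continuous_intros)
      then have cm: "continuous_map euclidean ?T f"
        using fF by (simp add: continuous_map_in_subtopology)
      define I where "I = ?T interior_of U_star N"
      have oI: "openin ?T I" unfolding I_def by (rule openin_interior_of)
      have IU: "I \<subseteq> U_star N" unfolding I_def by (rule interior_of_subset)
      have "f 0 \<in> I" using x0I x0 unfolding I_def by metis
      have "openin euclidean {t \<in> topspace euclidean. f t \<in> I}"
        by (rule openin_continuous_map_preimage[OF cm oI])
      then have op: "open {t. f t \<in> I}" by (simp only: open_openin topspace_euclidean UNIV_I simp_thms)
      have "0 \<in> {t. f t \<in> I}" using \<open>f 0 \<in> I\<close> by simp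
      then obtain e where e: "e > 0" "ball 0 e \<subseteq> {t. f t \<in> I}"
        using open_contains_ball_eq[OF op] by blast
      have "e/2 \<in> ball 0 e" using e(1) by simp
      then have "f (e/2) \<in> I" using e(2) by blast
      then have "f (e/2) \<in> U_star N" using IU by blast
      moreover have "f (e/2) \<notin> U_star N"
        unfolding f_def g_def
      proof (rule notU[OF lin a(1) b(1) _ a(2) b(3)])
        show "a \<noteq> b" using b(2) by simp
        show "\<And>i j. ?\<rho> i j = ?\<rho> j i" by (rule rho_sym)
        show "\<And>i. i < N \<Longrightarrow> ?\<rho> i i = 1" by (rule diag)
        show "0 < e / 2" using e(1) by simp
      qed
      ultimately show False by blast
    qed
    show ?thesis unfolding frontier_of_def by (rule DiffI[OF cl notint])
  qed
  show ?thesis by (rule conjI[OF part1 impI[OF part2]])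
qed

end
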